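(* Let $M$ be a multigraph with $n$ vertices. Then $M$ is the double competition multigraph of a reflexive digraph if and only if there exist an ordering $(v_1,\ldots,v_n)$ of the vertices of $M$ and a double indexed edge clique partition $\{S_{ij}\mid i,j\in[n]\}$ of $M$ such that the following conditions hold: (I) for any $i,j\in[n]$, if $|A_i\cap B_j|\ge 2$, then $A_i\cap B_j=S_{ij}$; (III) for any $i\in[n]$, $v_i\in S_{i*}\cup S_{*i}$, where $A_i = S_{i*}\cup T^+_i$, $S_{i*} := \bigcup_{p\in[n]} S_{ip}$, $T^+_i := \{v_b \mid a,b\in[n],\ v_i\in S_{ab}\}$, and $B_j = S_{*j}\cup T^-_j$, $S_{*j} := \bigcup_{q\in[n]} S_{qj}$, $T^-_j := \{v_a \mid a,b\in[n],\ v_j\in S_{ab}\}$.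
   Context: A digraph $D$ is a pair $(V(D),A(D))$ with $A(D)$ a set of ordered pairs of vertices (arcs); an arc $(v,v)$ is a loop, and $D$ is reflexive if $(v,v)\in A(D)$ for every $v\in V(D)$. $N^+_D(x)=\{v\mid (x,v)\in A(D)\}$ and $N^-_D(x)=\{v\mid (v,x)\in A(D)\}$. A multigraph $M$ (without loops) is a vertex set $V(M)$ together with a function $m_M$ assigning to each unordered pair $\{x,y\}$ of distinct vertices a nonnegative integer, the number of edges between $x$ and $y$. The double competition multigraph of a digraph $D$ is the multigraph $M$ with $V(M)=V(D)$ and $m_M(\{x,y\}) = |N^+_D(x)\cap N^+_D(y)|\cdot|N^-_D(x)\cap N^-_D(y)|$ for distinct $x,y$. A clique of $M$ is a set of vertices that are pairwise adjacent (i.e. $m_M\ge 1$ on every pair of distinct elements); the empty set and singletons count as cliques. An edge clique partition of $M$ is a family (multiset) $\mathcal{F}$ of cliques of $M$ such that any two distinct vertices $x,y$ are contained in exactly $m_M(\{x,y\})$ members of $\mathcal{F}$; a double indexed edge clique partition $\{S_{ij}\mid i,j\in[n]\}$ is such a family indexed by pairs $(i,j)\in[n]\times[n]$ (members may be empty). $[n]=\{1,\ldots,n\}$. *)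

theory Defs
  imports Main
begin

(* A multigraph on vertex set V is given by V together with a multiplicity
   function m on unordered pairs: m {x,y} for distinct x, y in V. *)

definition out_nbr :: "('a \<times> 'a) set \<Rightarrow> 'a \<Rightarrow> 'a set" where
  "out_nbr A x = {v. (x, v) \<in> A}"

definition in_nbr :: "('a \<times> 'a) set \<Rightarrow> 'a \<Rightarrow> 'a set" where
  "in_nbr A x = {v. (v, x) \<in> A}"

definition is_digraph_on :: "'a set \<Rightarrow> ('a \<times> 'a) set \<Rightarrow> bool" where
  "is_digraph_on V A \<longleftrightarrow> A \<subseteq> V \<times> V"

definition reflexive_digraph :: "'a set \<Rightarrow> ('a \<times> 'a) set \<Rightarrow> bool" where
  "reflexive_digraph V A \<longleftrightarrow> (\<forall>v\<in>V. (v, v) \<in> A)"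

definition is_double_competition_multigraph ::
  "'a set \<Rightarrow> ('a set \<Rightarrow> nat) \<Rightarrow> ('a \<times> 'a) set \<Rightarrow> bool" where
  "is_double_competition_multigraph V m A \<longleftrightarrow>
     (\<forall>x\<in>V. \<forall>y\<in>V. x \<noteq> y \<longrightarrow>
        m {x, y} = card (out_nbr A x \<inter> out_nbr A y) * card (in_nbr A x \<inter> in_nbr A y))"

definition is_clique :: "'a set \<Rightarrow> ('a set \<Rightarrow> nat) \<Rightarrow> 'a set \<Rightarrow> bool" where
  "is_clique V m Q \<longleftrightarrow> Q \<subseteq> V \<and> (\<forall>x\<in>Q. \<forall>y\<in>Q. x \<noteq> y \<longrightarrow> m {x, y} \<ge> 1)"

(* {S i j | i, j \<in> [n]} is a double indexed edge clique partition of (V, m):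
   members counted with multiplicity via their indices *)
definition double_indexed_ecp ::
  "'a set \<Rightarrow> ('a set \<Rightarrow> nat) \<Rightarrow> nat \<Rightarrow> (nat \<Rightarrow> nat \<Rightarrow> 'a set) \<Rightarrow> bool" where
  "double_indexed_ecp V m n S \<longleftrightarrow>
     (\<forall>i\<in>{1..n}. \<forall>j\<in>{1..n}. is_clique V m (S i j)) \<and>
     (\<forall>x\<in>V. \<forall>y\<in>V. x \<noteq> y \<longrightarrow>
        card {(i, j). i \<in> {1..n} \<and> j \<in> {1..n} \<and> x \<in> S i j \<and> y \<in> S i j} = m {x, y})"

definition S_row :: "nat \<Rightarrow> (nat \<Rightarrow> nat \<Rightarrow> 'a set) \<Rightarrow> nat \<Rightarrow> 'a set" where
  "S_row n S i = (\<Union>p\<in>{1..n}. S i p)"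

definition S_col :: "nat \<Rightarrow> (nat \<Rightarrow> nat \<Rightarrow> 'a set) \<Rightarrow> nat \<Rightarrow> 'a set" where
  "S_col n S j = (\<Union>q\<in>{1..n}. S q j)"

definition T_plus :: "nat \<Rightarrow> (nat \<Rightarrow> 'a) \<Rightarrow> (nat \<Rightarrow> nat \<Rightarrow> 'a set) \<Rightarrow> nat \<Rightarrow> 'a set" where
  "T_plus n v S i = {v b | a b. a \<in> {1..n} \<and> b \<in> {1..n} \<and> v i \<in> S a b}"

definition T_minus :: "nat \<Rightarrow> (nat \<Rightarrow> 'a) \<Rightarrow> (nat \<Rightarrow> nat \<Rightarrow> 'a set) \<Rightarrow> nat \<Rightarrow> 'a set" where
  "T_minus n v S j = {v a | a b. a \<in> {1..n} \<and> b \<in> {1..n} \<and> v j \<in> S a b}"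

definition A_set :: "nat \<Rightarrow> (nat \<Rightarrow> 'a) \<Rightarrow> (nat \<Rightarrow> nat \<Rightarrow> 'a set) \<Rightarrow> nat \<Rightarrow> 'a set" where
  "A_set n v S i = S_row n S i \<union> T_plus n v S i"

definition B_set :: "nat \<Rightarrow> (nat \<Rightarrow> 'a) \<Rightarrow> (nat \<Rightarrow> nat \<Rightarrow> 'a set) \<Rightarrow> nat \<Rightarrow> 'a set" where
  "B_set n v S j = S_col n S j \<union> T_minus n v S j"

end

theory Submission
  imports Defs
begin

lemma count_lemma:
  assumes v: "bij_betw v {1..n} V" and X: "X \<subseteq> V" and Y: "Y \<subseteq> V"
  shows "card {(i,j). i \<in> {1..n} \<and> j \<in> {1..n} \<and> v i \<in> X \<and> v j \<in> Y} = card X * card Y"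
proof -
  let ?I = "{i\<in>{1..n}. v i \<in> X}" and ?J = "{i\<in>{1..n}. v i \<in> Y}"
  have e: "{(i,j). i \<in> {1..n} \<and> j \<in> {1..n} \<and> v i \<in> X \<and> v j \<in> Y} = ?I \<times> ?J" by auto
  have im: "v ` {1..n} = V" using v bij_betw_imp_surj_on by blast
  have "v ` ?I = X" using X im by auto
  then have "bij_betw v ?I X" by (intro bij_betw_subset[OF v]) auto
  hence c1: "card ?I = card X" by (rule bij_betw_same_card)
  have "v ` ?J = Y" using Y im by auto
  then have "bij_betw v ?J Y" by (intro bij_betw_subset[OF v]) auto
  hence c2: "card ?J = card Y" by (rule bij_betw_same_card)
  show ?thesis unfolding e card_cartesian_product c1 c2 ..
qed

lemma forward:
  assumes fin: "finite V" and cV: "card V = n"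
    and dg: "is_digraph_on V A" and rf: "reflexive_digraph V A"
    and dc: "is_double_competition_multigraph V m A"
  shows "\<exists>v S. bij_betw v {1..n} V \<and> double_indexed_ecp V m n S \<and>
        (\<forall>i\<in>{1..n}. \<forall>j\<in>{1..n}.
            card (A_set n v S i \<inter> B_set n v S j) \<ge> 2 \<longrightarrow>
            A_set n v S i \<inter> B_set n v S j = S i j) \<and>
        (\<forall>i\<in>{1..n}. v i \<in> S_row n S i \<union> S_col n S i)"
proof -
  obtain v where v: "bij_betw v {1..n} V" using ex_bij_betw_nat_finite_1[OF fin] cV by auto
  define S where "S i j = in_nbr A (v i) \<inter> out_nbr A (v j)" for i j
  have im: "v ` {1..n} = V" using v bij_betw_imp_surj_on by blast
  have vV: "\<And>i. i\<in>{1..n} \<Longrightarrow> v i \<in> V" using im by auto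
  have sur: "\<And>x. x\<in>V \<Longrightarrow> \<exists>i\<in>{1..n}. v i = x" using im by auto
  have AV: "\<And>x y. (x,y) \<in> A \<Longrightarrow> x \<in> V \<and> y \<in> V" using dg unfolding is_digraph_on_def by auto
  have refl: "\<And>x. x \<in> V \<Longrightarrow> (x,x) \<in> A" using rf unfolding reflexive_digraph_def by auto
  have Arow: "A_set n v S i = in_nbr A (v i)" if i: "i \<in> {1..n}" for i
  proof
    show "A_set n v S i \<subseteq> in_nbr A (v i)"
      unfolding A_set_def S_row_def T_plus_def S_def in_nbr_def out_nbr_def by auto
    show "in_nbr A (v i) \<subseteq> A_set n v S i"
    proof
      fix x assume x: "x \<in> in_nbr A (v i)"
      hence "(x, v i) \<in> A" by (simp add: in_nbr_def)
      hence xV: "x \<in> V" using AV by auto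
      then obtain p where p: "p \<in> {1..n}" "v p = x" using sur by blast
      have "x \<in> S i p" using x p refl[OF xV] unfolding S_def out_nbr_def by auto
      thus "x \<in> A_set n v S i" using p unfolding A_set_def S_row_def by auto
    qed
  qed
  have Bcol: "B_set n v S j = out_nbr A (v j)" if j: "j \<in> {1..n}" for j
  proof
    show "B_set n v S j \<subseteq> out_nbr A (v j)"
      unfolding B_set_def S_col_def T_minus_def S_def in_nbr_def out_nbr_def by auto
    show "out_nbr A (v j) \<subseteq> B_set n v S j"
    proof
      fix x assume x: "x \<in> out_nbr A (v j)"
      hence "(v j, x) \<in> A" by (simp add: out_nbr_def)
      hence xV: "x \<in> V" using AV by auto
      then obtain p where p: "p \<in> {1..n}" "v p = x" using sur by blast
      have "x \<in> S p j" using x p refl[OF xV] unfolding S_def in_nbr_def by auto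
      thus "x \<in> B_set n v S j" using p unfolding B_set_def S_col_def by auto
    qed
  qed
  have outV: "out_nbr A x \<subseteq> V" for x using AV unfolding out_nbr_def by auto
  have inV: "in_nbr A x \<subseteq> V" for x using AV unfolding in_nbr_def by auto
  have ecp: "double_indexed_ecp V m n S"
    unfolding double_indexed_ecp_def
  proof (intro conjI ballI impI allI)
    fix i j assume i: "i \<in> {1..n}" and j: "j \<in> {1..n}"
    show "is_clique V m (S i j)" unfolding is_clique_def
    proof (intro conjI ballI impI)
      show "S i j \<subseteq> V" using inV unfolding S_def by auto
    next
      fix x y assume x: "x \<in> S i j" and y: "y \<in> S i j" and xy: "x \<noteq> y"
      have xV: "x \<in> V" and yV: "y \<in> V" using x y inV unfolding S_def by auto
      have "v i \<in> out_nbr A x \<inter> out_nbr A y" using x y unfolding S_def in_nbr_def out_nbr_def by auto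
      moreover have "finite (out_nbr A x \<inter> out_nbr A y)" using outV fin by (meson finite_subset inf.coboundedI1)
      ultimately have c1: "card (out_nbr A x \<inter> out_nbr A y) \<ge> 1"
        by (metis One_nat_def Suc_leI card_gt_0_iff empty_iff)
      have "v j \<in> in_nbr A x \<inter> in_nbr A y" using x y unfolding S_def in_nbr_def out_nbr_def by auto
      moreover have "finite (in_nbr A x \<inter> in_nbr A y)" using inV fin by (meson finite_subset inf.coboundedI1)
      ultimately have c2: "card (in_nbr A x \<inter> in_nbr A y) \<ge> 1"
        by (metis One_nat_def Suc_leI card_gt_0_iff empty_iff)
      have "m {x,y} = card (out_nbr A x \<inter> out_nbr A y) * card (in_nbr A x \<inter> in_nbr A y)"
        using dc xV yV xy unfolding is_double_competition_multigraph_def by auto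
      thus "1 \<le> m {x,y}" using c1 c2 by simp
    qed
  next
    fix x y assume xV: "x \<in> V" and yV: "y \<in> V" and xy: "x \<noteq> y"
    have "{(i, j). i \<in> {1..n} \<and> j \<in> {1..n} \<and> x \<in> S i j \<and> y \<in> S i j}
      = {(i,j). i \<in> {1..n} \<and> j \<in> {1..n} \<and> v i \<in> out_nbr A x \<inter> out_nbr A y \<and> v j \<in> in_nbr A x \<inter> in_nbr A y}"
      unfolding S_def in_nbr_def out_nbr_def by auto
    also have "card \<dots> = card (out_nbr A x \<inter> out_nbr A y) * card (in_nbr A x \<inter> in_nbr A y)"
      by (rule count_lemma[OF v]) (use outV inV in blast)+
    also have "\<dots> = m {x,y}"
      using dc xV yV xy unfolding is_double_competition_multigraph_def by auto
    finally show "card {(i, j). i \<in> {1..n} \<and> j \<in> {1..n} \<and> x \<in> S i j \<and> y \<in> S i j} = m {x, y}" .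
  qed
  have I: "\<forall>i\<in>{1..n}. \<forall>j\<in>{1..n}.
            card (A_set n v S i \<inter> B_set n v S j) \<ge> 2 \<longrightarrow>
            A_set n v S i \<inter> B_set n v S j = S i j"
  proof (intro ballI impI)
    fix i j assume i: "i \<in> {1..n}" and j: "j \<in> {1..n}"
    show "A_set n v S i \<inter> B_set n v S j = S i j" using Arow[OF i] Bcol[OF j] by (simp add: S_def)
  qed
  have III: "\<forall>i\<in>{1..n}. v i \<in> S_row n S i \<union> S_col n S i"
  proof
    fix i assume i: "i \<in> {1..n}"
    have "v i \<in> S i i" using refl[OF vV[OF i]] unfolding S_def in_nbr_def out_nbr_def by auto
    thus "v i \<in> S_row n S i \<union> S_col n S i" using i unfolding S_row_def by auto
  qed
  show ?thesis using v ecp I III by blast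
qed


lemma backward:
  assumes fin: "finite V" and v: "bij_betw v {1..n} V" and ecp: "double_indexed_ecp V m n S"
    and I: "\<forall>i\<in>{1..n}. \<forall>j\<in>{1..n}.
            card (A_set n v S i \<inter> B_set n v S j) \<ge> 2 \<longrightarrow>
            A_set n v S i \<inter> B_set n v S j = S i j"
    and III: "\<forall>i\<in>{1..n}. v i \<in> S_row n S i \<union> S_col n S i"
  shows "\<exists>A. is_digraph_on V A \<and> reflexive_digraph V A \<and>
              is_double_competition_multigraph V m A"
proof -
  define A where "A = {(x, v i) | x i. i \<in> {1..n} \<and> x \<in> A_set n v S i}"
  have im: "v ` {1..n} = V" using v bij_betw_imp_surj_on by blast
  have vV: "\<And>i. i\<in>{1..n} \<Longrightarrow> v i \<in> V" using im by auto
  have sur: "\<And>x. x\<in>V \<Longrightarrow> \<exists>i\<in>{1..n}. v i = x" using im by auto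
  have inj: "inj_on v {1..n}" using v bij_betw_imp_inj_on by blast
  have SV: "S i j \<subseteq> V" if "i \<in> {1..n}" "j \<in> {1..n}" for i j
    using ecp that unfolding double_indexed_ecp_def is_clique_def by blast
  have AsetV: "A_set n v S i \<subseteq> V" if "i \<in> {1..n}" for i
    using SV that vV unfolding A_set_def S_row_def T_plus_def by blast
  have BsetV: "B_set n v S i \<subseteq> V" if "i \<in> {1..n}" for i
    using SV that vV unfolding B_set_def S_col_def T_minus_def by blast
  have symm: "v k \<in> A_set n v S i \<longleftrightarrow> v i \<in> B_set n v S k"
    if i: "i \<in> {1..n}" and k: "k \<in> {1..n}" for i k
  proof -
    have "v k \<in> A_set n v S i \<longleftrightarrow> (\<exists>p\<in>{1..n}. v k \<in> S i p) \<or> (\<exists>a\<in>{1..n}. v i \<in> S a k)"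
      unfolding A_set_def S_row_def T_plus_def using inj_on_eq_iff[OF inj] k by auto
    moreover have "v i \<in> B_set n v S k \<longleftrightarrow> (\<exists>p\<in>{1..n}. v k \<in> S i p) \<or> (\<exists>a\<in>{1..n}. v i \<in> S a k)"
      unfolding B_set_def S_col_def T_minus_def using inj_on_eq_iff[OF inj] i by auto
    ultimately show ?thesis by simp
  qed
  have inA: "(x, v i) \<in> A \<longleftrightarrow> x \<in> A_set n v S i" if i: "i \<in> {1..n}" for x i
    unfolding A_def using inj_on_eq_iff[OF inj] i by auto
  have outA: "(v j, x) \<in> A \<longleftrightarrow> x \<in> B_set n v S j" if j: "j \<in> {1..n}" and x: "x \<in> V" for x j
  proof -
    obtain k where k: "k \<in> {1..n}" "v k = x" using sur x by blast
    show ?thesis using inA[OF k(1)] symm[OF k(1) j] k by simp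
  qed
  have dg: "is_digraph_on V A" unfolding is_digraph_on_def A_def using AsetV vV by blast
  have rf: "reflexive_digraph V A" unfolding reflexive_digraph_def
  proof
    fix x assume x: "x \<in> V"
    obtain i where i: "i \<in> {1..n}" "v i = x" using sur x by blast
    have "v i \<in> A_set n v S i"
    proof (cases "v i \<in> S_row n S i")
      case True thus ?thesis unfolding A_set_def by simp
    next
      case False
      hence "v i \<in> S_col n S i" using III i by blast
      then obtain q where "q \<in> {1..n}" "v i \<in> S q i" unfolding S_col_def by blast
      hence "v i \<in> T_plus n v S i" unfolding T_plus_def using i by blast
      thus ?thesis unfolding A_set_def by simp
    qed
    thus "(x,x) \<in> A" using inA[OF i(1)] i by simp
  qed
  have outV: "out_nbr A x \<subseteq> V" for x using dg unfolding is_digraph_on_def out_nbr_def by auto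
  have inV: "in_nbr A x \<subseteq> V" for x using dg unfolding is_digraph_on_def in_nbr_def by auto
  have SAB: "S i j \<subseteq> A_set n v S i \<inter> B_set n v S j" if "i \<in> {1..n}" "j \<in> {1..n}" for i j
    using that unfolding A_set_def B_set_def S_row_def S_col_def by blast
  have dc: "is_double_competition_multigraph V m A"
    unfolding is_double_competition_multigraph_def
  proof (intro ballI impI)
    fix x y assume xV: "x \<in> V" and yV: "y \<in> V" and xy: "x \<noteq> y"
    have eq: "(v i \<in> out_nbr A x \<inter> out_nbr A y \<and> v j \<in> in_nbr A x \<inter> in_nbr A y)
       \<longleftrightarrow> (x \<in> S i j \<and> y \<in> S i j)" if i: "i \<in> {1..n}" and j: "j \<in> {1..n}" for i j
    proof -
      have "(v i \<in> out_nbr A x \<inter> out_nbr A y \<and> v j \<in> in_nbr A x \<inter> in_nbr A y)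
        \<longleftrightarrow> x \<in> A_set n v S i \<inter> B_set n v S j \<and> y \<in> A_set n v S i \<inter> B_set n v S j"
        unfolding out_nbr_def in_nbr_def using inA[OF i] outA[OF j] xV yV by auto
      also have "\<dots> \<longleftrightarrow> (x \<in> S i j \<and> y \<in> S i j)"
      proof
        assume h: "x \<in> A_set n v S i \<inter> B_set n v S j \<and> y \<in> A_set n v S i \<inter> B_set n v S j"
        have "finite (A_set n v S i \<inter> B_set n v S j)"
          using AsetV[OF i] fin by (meson finite_subset inf.coboundedI1)
        hence "card {x,y} \<le> card (A_set n v S i \<inter> B_set n v S j)"
          using h by (intro card_mono) auto
        hence "card (A_set n v S i \<inter> B_set n v S j) \<ge> 2" using xy by simp
        hence "A_set n v S i \<inter> B_set n v S j = S i j" using I i j by blast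
        thus "x \<in> S i j \<and> y \<in> S i j" using h by blast
      next
        assume "x \<in> S i j \<and> y \<in> S i j"
        thus "x \<in> A_set n v S i \<inter> B_set n v S j \<and> y \<in> A_set n v S i \<inter> B_set n v S j"
          using SAB[OF i j] by blast
      qed
      finally show ?thesis .
    qed
    have "m {x,y} = card {(i, j). i \<in> {1..n} \<and> j \<in> {1..n} \<and> x \<in> S i j \<and> y \<in> S i j}"
      using ecp xV yV xy unfolding double_indexed_ecp_def by auto
    also have "{(i, j). i \<in> {1..n} \<and> j \<in> {1..n} \<and> x \<in> S i j \<and> y \<in> S i j}
      = {(i,j). i \<in> {1..n} \<and> j \<in> {1..n} \<and> v i \<in> out_nbr A x \<inter> out_nbr A y \<and> v j \<in> in_nbr A x \<inter> in_nbr A y}"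
      using eq by auto
    also have "card \<dots> = card (out_nbr A x \<inter> out_nbr A y) * card (in_nbr A x \<inter> in_nbr A y)"
      by (rule count_lemma[OF v]) (use outV inV in blast)+
    finally show "m {x,y} = card (out_nbr A x \<inter> out_nbr A y) * card (in_nbr A x \<inter> in_nbr A y)" .
  qed
  show ?thesis using dg rf dc by blast
qed

theorem theorem3:
  fixes V :: "'a set" and m :: "'a set \<Rightarrow> nat" and n :: nat
  assumes "finite V" and "card V = n"
  shows "(\<exists>A. is_digraph_on V A \<and> reflexive_digraph V A \<and>
              is_double_competition_multigraph V m A)
     \<longleftrightarrow>
     (\<exists>v S. bij_betw v {1..n} V \<and> double_indexed_ecp V m n S \<and>
        (\<forall>i\<in>{1..n}. \<forall>j\<in>{1..n}.
            card (A_set n v S i \<inter> B_set n v S j) \<ge> 2 \<longrightarrow>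
            A_set n v S i \<inter> B_set n v S j = S i j) \<and>
        (\<forall>i\<in>{1..n}. v i \<in> S_row n S i \<union> S_col n S i))"
proof
  assume "\<exists>A. is_digraph_on V A \<and> reflexive_digraph V A \<and> is_double_competition_multigraph V m A"
  then obtain A where "is_digraph_on V A" "reflexive_digraph V A" "is_double_competition_multigraph V m A" by blast
  from forward[OF assms this] show "\<exists>v S. bij_betw v {1..n} V \<and> double_indexed_ecp V m n S \<and>
        (\<forall>i\<in>{1..n}. \<forall>j\<in>{1..n}.
            card (A_set n v S i \<inter> B_set n v S j) \<ge> 2 \<longrightarrow>
            A_set n v S i \<inter> B_set n v S j = S i j) \<and>
        (\<forall>i\<in>{1..n}. v i \<in> S_row n S i \<union> S_col n S i)" .
next
  assume "\<exists>v S. bij_betw v {1..n} V \<and> double_indexed_ecp V m n S \<and>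
        (\<forall>i\<in>{1..n}. \<forall>j\<in>{1..n}.
            card (A_set n v S i \<inter> B_set n v S j) \<ge> 2 \<longrightarrow>
            A_set n v S i \<inter> B_set n v S j = S i j) \<and>
        (\<forall>i\<in>{1..n}. v i \<in> S_row n S i \<union> S_col n S i)"
  then obtain v S where h: "bij_betw v {1..n} V" "double_indexed_ecp V m n S"
     "\<forall>i\<in>{1..n}. \<forall>j\<in>{1..n}.
            card (A_set n v S i \<inter> B_set n v S j) \<ge> 2 \<longrightarrow>
            A_set n v S i \<inter> B_set n v S j = S i j"
     "\<forall>i\<in>{1..n}. v i \<in> S_row n S i \<union> S_col n S i" by blast
  show "\<exists>A. is_digraph_on V A \<and> reflexive_digraph V A \<and> is_double_competition_multigraph V m A"
    by (rule backward[OF assms(1) h])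
qed

end
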